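(* Let $s,t\in[0,\infty[$, $r\in[1,\infty[$ with $r'=\frac r{r-1}$, and $b\in[-1,1]$. Let $\varkappa(r)=\sup_{u\in]0,1[}\big[(1+u^{1/r})(1+u^{1/r'})(1+u^{1/2})^{-2}\big]$. Then (l1) $\frac4{rr'}(s^{r/2}-t^{r/2})^2\le(s-t)(s^{r-1}-t^{r-1})\le(s^{r/2}-t^{r/2})^2$; (l2) $(s^{r/2}+t^{r/2})^2\le(s+t)(s^{r-1}+t^{r-1})\le\varkappa(r)(s^{r/2}+t^{r/2})^2$; (l3) $\frac4{rr'}(s^r+t^r+2b(st)^{r/2})\le s^r+t^r+b(st^{r-1}+ts^{r-1})$; (l4) $|b|\,|st^{r-1}-ts^{r-1}|\le\frac{|r-2|}{2\sqrt{r-1}}\big[s^r+t^r-\sqrt{1-b^2}(st^{r-1}+ts^{r-1})\big]$; (l5) $s^r+t^r+b(st^{r-1}+ts^{r-1})\le\varkappa(r)(s^r+t^r+2b(st)^{r/2})$. *)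

theory Defs
  imports Complex_Main
begin

text \<open>Real power with the usual convention x^0 = 1 (also for x = 0);
  for positive exponents this is just powr (so 0^a = 0 for a > 0).\<close>
definition pw :: "real \<Rightarrow> real \<Rightarrow> real" where
  "pw x a = (if a = 0 then 1 else x powr a)"

text \<open>For r = 1 the paper's r' = \<infinity>;
  Isabelle's convention x/0 = 0 gives conj_exp 1 = 0, and then 1/r' = 0 and
  4/(r r') = 0, which agree with the values 1/\<infinity> = 0 used in the paper.\<close>
definition conj_exp :: "real \<Rightarrow> real" where
  "conj_exp r = r / (r - 1)"

definition kappa :: "real \<Rightarrow> real" where
  "kappa r = (SUP u\<in>{0<..<1}. (1 + u powr (1/r)) * (1 + u powr (1 / conj_exp r))
                                 / (1 + u powr (1/2))\<^sup>2)"

end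

theory Submission
  imports Defs
begin

lemma sinh_conv:
  fixes a z :: real
  assumes "0 \<le> a" "a \<le> 1" "0 \<le> z"
  shows "sinh (a*z) \<le> a * sinh z"
proof -
  let ?h = "\<lambda>x. a * sinh x - sinh (a*x)"
  have "?h 0 \<le> ?h z"
  proof (rule DERIV_nonneg_imp_increasing_open[OF assms(3)])
    fix x assume x: "0 < x" "x < z"
    have "cosh (a*x) \<le> cosh x"
      using x assms by (subst cosh_real_nonneg_le_iff) (auto simp: mult_left_le_one_le)
    then have "0 \<le> a * cosh x - cosh (a*x) * a" using assms(1)
      by (metis diff_ge_0_iff_ge mult.commute mult_left_mono)
    moreover have "DERIV ?h x :> a * cosh x - cosh (a*x) * a"
      by (auto intro!: derivative_eq_intros)
    ultimately show "\<exists>y. DERIV ?h x :> y \<and> y \<ge> 0" by blast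
  next
    show "continuous_on {0..z} ?h" by (intro continuous_intros)
  qed
  then show ?thesis by simp
qed

lemma abs_sinh: "\<bar>sinh (x::real)\<bar> = sinh \<bar>x\<bar>"
proof (cases "x \<ge> 0")
  case True then show ?thesis by (simp add: abs_of_nonneg)
next
  case False
  then have "sinh x < 0" by simp
  then have "\<bar>sinh x\<bar> = - sinh x" by simp
  also have "\<dots> = sinh (-x)" by simp
  also have "-x = \<bar>x\<bar>" using False by simp
  finally show ?thesis .
qed

lemma sinh_abs:
  fixes a z :: real
  assumes "\<bar>a\<bar> \<le> 1"
  shows "\<bar>sinh (a*z)\<bar> \<le> \<bar>a\<bar> * \<bar>sinh z\<bar>"
proof -
  have "sinh (\<bar>a\<bar>*\<bar>z\<bar>) \<le> \<bar>a\<bar> * sinh \<bar>z\<bar>" using sinh_conv[of "\<bar>a\<bar>" "\<bar>z\<bar>"] assms by simp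
  then show ?thesis unfolding abs_sinh abs_mult .
qed

lemma cosh_half: "cosh (x::real) = 1 + 2 * sinh (x/2)^2"
  using cosh_double[of "x/2"] by (simp add: cosh_square_eq)

lemma cosh_conv:
  fixes a z :: real
  assumes "\<bar>a\<bar> \<le> 1"
  shows "cosh (a*z) - 1 \<le> a^2 * (cosh z - 1)"
proof -
  have "\<bar>sinh (a*(z/2))\<bar> \<le> \<bar>a\<bar> * \<bar>sinh (z/2)\<bar>" by (rule sinh_abs[OF assms])
  then have "sinh (a*(z/2))^2 \<le> (\<bar>a\<bar> * \<bar>sinh (z/2)\<bar>)^2"
    by (metis abs_ge_zero abs_le_square_iff abs_mult abs_abs)
  then show ?thesis
    using cosh_half[of "a*z"] cosh_half[of z] by (simp add: power_mult_distrib)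
qed


lemma pw_pos: "x > 0 \<Longrightarrow> pw x a = x powr a" by (simp add: pw_def)
lemma pw_exp: "x > 0 \<Longrightarrow> pw x a = exp (a * ln x)" by (simp add: pw_def powr_def)
lemma pw_nonneg: "x \<ge> 0 \<Longrightarrow> pw x a \<ge> 0" by (simp add: pw_def)
lemma pw_zero: "a \<noteq> 0 \<Longrightarrow> pw 0 a = 0" by (simp add: pw_def)

lemma I1: assumes "s \<ge> 0" "r \<ge> 1" shows "s * pw s (r-1) = pw s r"
proof (cases "s = 0")
  case True then show ?thesis using assms by (cases "r = 1") (auto simp: pw_def)
next
  case False
  then have "s > 0" using assms by simp
  then show ?thesis using assms by (simp add: pw_pos powr_mult_base)
qed

lemma I2: assumes "s \<ge> 0" "r > 0" shows "(pw s (r/2))^2 = pw s r"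
proof (cases "s = 0")
  case True then show ?thesis using assms by (auto simp: pw_def)
next
  case False
  then have "s > 0" using assms by simp
  then show ?thesis using assms by (simp add: pw_pos power2_eq_square powr_add[symmetric])
qed

lemma I3: assumes "s \<ge> 0" "t \<ge> 0" "r > 0" shows "pw (s*t) (r/2) = pw s (r/2) * pw t (r/2)"
  using assms by (simp add: pw_def powr_mult)

lemma rep:
  assumes "s > 0" "t > 0" "r \<ge> 1"
  shows "\<exists>E z. E > 0 \<and> pw s r + pw t r = 2*E*cosh z
     \<and> s*pw t (r-1) + t*pw s (r-1) = 2*E*cosh (((2-r)/r)*z)
     \<and> s*pw t (r-1) - t*pw s (r-1) = 2*E*sinh (((2-r)/r)*z)
     \<and> pw s (r/2) * pw t (r/2) = E"
proof -
  define p where "p = ln s"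
  define q where "q = ln t"
  define m where "m = (p+q)/2"
  define d where "d = (p-q)/2"
  define E where "E = exp (r*m)"
  define z where "z = r*d"
  have sp: "s = exp p" "t = exp q" using assms by (simp_all add: p_def q_def)
  have pw_s: "pw s a = exp (a*p)" for a using pw_exp[OF assms(1)] p_def by simp
  have pw_t: "pw t a = exp (a*q)" for a using pw_exp[OF assms(2)] q_def by simp
  have az: "((2-r)/r)*z = (2-r)*d" using assms(3) by (simp add: z_def)
  have e1: "pw s r = E * exp z"
    unfolding pw_s E_def z_def exp_add[symmetric] by (simp add: m_def d_def field_simps)
  have e2: "pw t r = E * exp (-z)"
    unfolding pw_t E_def z_def exp_add[symmetric] by (simp add: m_def d_def field_simps)
  have e3: "s * pw t (r-1) = E * exp ((2-r)*d)"
    unfolding pw_t E_def sp(1) exp_add[symmetric] by (simp add: m_def d_def field_simps)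
  have e4: "t * pw s (r-1) = E * exp (-((2-r)*d))"
    unfolding pw_s E_def sp(2) exp_add[symmetric] by (simp add: m_def d_def field_simps)
  have e5: "pw s (r/2) * pw t (r/2) = E"
    unfolding pw_s pw_t E_def exp_add[symmetric] by (simp add: m_def d_def field_simps)
  show ?thesis
    apply (rule exI[of _ E], rule exI[of _ z])
    unfolding az e1 e2 e3 e4 e5 cosh_def sinh_def
    by (simp add: E_def algebra_simps)
qed

lemma core1:
  fixes a z E :: real
  assumes "\<bar>a\<bar> \<le> 1" "E > 0"
  shows "(1 - a^2) * (2*E*cosh z - 2*E) \<le> 2*E*cosh z - 2*E*cosh (a*z)"
proof -
  have "E * (cosh (a*z) - 1) \<le> E * (a^2 * (cosh z - 1))"
    using cosh_conv[OF assms(1), of z] assms(2) by (intro mult_left_mono) auto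
  then show ?thesis by (simp add: algebra_simps)
qed

lemma core4:
  fixes a z E k b :: real
  assumes "\<bar>a\<bar> \<le> 1" "E > 0" "k \<ge> 0" "(1 + k^2) * a^2 = k^2" "\<bar>b\<bar> \<le> 1"
  shows "\<bar>b\<bar> * \<bar>2*E*sinh (a*z)\<bar> \<le> k * (2*E*cosh z - sqrt (1 - b^2) * (2*E*cosh (a*z)))"
proof -
  define S where "S = \<bar>sinh (a*z)\<bar>"
  define C where "C = cosh (a*z)"
  define W where "W = cosh z"
  define \<beta> where "\<beta> = sqrt (1 - b^2)"
  have "b^2 \<le> 1" using assms(5) by (simp add: abs_square_le_1)
  then have b2: "\<beta>^2 = 1 - b^2" unfolding \<beta>_def by simp
  have C2: "C^2 = S^2 + 1" unfolding C_def S_def by (simp add: cosh_square_eq)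
  have W2: "W^2 = sinh z ^2 + 1" unfolding W_def by (simp add: cosh_square_eq)
  have "S \<le> \<bar>a\<bar> * \<bar>sinh z\<bar>" unfolding S_def by (rule sinh_abs[OF assms(1)])
  then have "S^2 \<le> (\<bar>a\<bar> * \<bar>sinh z\<bar>)^2" unfolding S_def by (intro power_mono) auto
  then have S2: "S^2 \<le> a^2 * sinh z^2" by (simp add: power_mult_distrib)
  have "(\<bar>b\<bar>*S + \<beta>*(k*C))^2 \<le> (b^2 + \<beta>^2) * (S^2 + (k*C)^2)"
  proof -
    have "0 \<le> (\<bar>b\<bar>*(k*C) - \<beta>*S)^2" by simp
    then show ?thesis by (simp add: power2_eq_square algebra_simps)
  qed
  also have "\<dots> = S^2 + k^2*C^2" using b2 by (simp add: power_mult_distrib)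
  also have "\<dots> = (1+k^2)*S^2 + k^2" using C2 by (simp add: algebra_simps)
  also have "\<dots> \<le> (1+k^2)*(a^2 * sinh z^2) + k^2"
    using S2 by (intro add_right_mono mult_left_mono) auto
  also have "\<dots> = k^2 * W^2" using assms(4) W2
    by (metis (no_types, lifting) distrib_left mult.assoc mult.commute mult.right_neutral)
  also have "\<dots> = (k*W)^2" by (simp add: power_mult_distrib)
  finally have "\<bar>b\<bar>*S + \<beta>*(k*C) \<le> k*W"
    by (rule power2_le_imp_le) (use assms(3) cosh_real_pos in \<open>simp add: W_def\<close>)
  then have "2*E*(\<bar>b\<bar>*S + \<beta>*(k*C)) \<le> 2*E*(k*W)" using assms(2) by simp
  moreover have "\<bar>2*E*sinh (a*z)\<bar> = 2*E*S" unfolding S_def using assms(2) by (simp add: abs_mult)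
  ultimately show ?thesis unfolding \<beta>_def[symmetric] C_def[symmetric] W_def[symmetric]
    by (simp only: algebra_simps)
qed

lemma c_eq: assumes "r \<ge> 1" shows "4/(r*conj_exp r) = 4*(r-1)/r^2"
proof (cases "r = 1")
  case True then show ?thesis by (simp add: conj_exp_def)
next
  case False then have "r - 1 \<noteq> 0" "r \<noteq> 0" using assms by auto
  then show ?thesis by (simp add: conj_exp_def field_simps power2_eq_square)
qed

lemma c_bounds: assumes "r \<ge> 1" shows "0 \<le> 4/(r*conj_exp r)" "4/(r*conj_exp r) \<le> 1"
proof -
  have "0 \<le> (r-2)^2" by simp
  then have "4*(r-1) \<le> r^2" by (simp add: power2_eq_square algebra_simps)
  moreover have "r^2 > 0" using assms by simp
  ultimately show "4/(r*conj_exp r) \<le> 1" "0 \<le> 4/(r*conj_exp r)"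
    unfolding c_eq[OF assms] using assms by (simp_all add: divide_le_eq)
qed

lemma F1:
  assumes "s \<ge> 0" "t \<ge> 0" "r \<ge> 1"
  shows "4/(r*conj_exp r) * (pw s (r/2) - pw t (r/2))^2 \<le> (s-t)*(pw s (r-1) - pw t (r-1))"
proof (cases "r = 1")
  case True then show ?thesis by (simp add: conj_exp_def pw_def)
next
  case False
  then have r1: "r > 1" using assms by simp
  define c where "c = 4/(r*conj_exp r)"
  have c01: "0 \<le> c" "c \<le> 1" using c_bounds[OF assms(3)] by (simp_all add: c_def)
  have L: "(pw s (r/2) - pw t (r/2))^2 = pw s r + pw t r - 2 * (pw s (r/2) * pw t (r/2))"
    using I2[OF assms(1)] I2[OF assms(2)] r1 by (simp add: power2_eq_square algebra_simps)
  have R: "(s-t)*(pw s (r-1) - pw t (r-1)) = pw s r + pw t r - (s*pw t (r-1) + t*pw s (r-1))"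
    using I1[OF assms(1,3)] I1[OF assms(2,3)] by (simp add: algebra_simps)
  have Pnn: "pw s r + pw t r \<ge> 0" using pw_nonneg assms by (simp add: add_nonneg_nonneg)
  show ?thesis
  proof (cases "s > 0 \<and> t > 0")
    case True
    then obtain E z where Ez: "E > 0" "pw s r + pw t r = 2*E*cosh z"
     "s*pw t (r-1) + t*pw s (r-1) = 2*E*cosh (((2-r)/r)*z)"
     "pw s (r/2) * pw t (r/2) = E" using rep[OF _ _ assms(3)] by blast
    have a1: "\<bar>(2-r)/r\<bar> \<le> 1" using r1 by (auto simp: abs_le_iff divide_le_eq le_divide_eq)
    have h: "1 - ((2-r)/r)^2 = c" unfolding c_def c_eq[OF assms(3)] using r1
      by (simp add: field_simps power2_eq_square)
    have "c * (2*E*cosh z - 2*E) \<le> 2*E*cosh z - 2*E*cosh (((2-r)/r)*z)"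
      using core1[OF a1 Ez(1), of z] unfolding h .
    then show ?thesis unfolding c_def[symmetric] L R Ez(2) Ez(3) Ez(4)
      by (simp add: algebra_simps)
  next
    case False
    then have z: "s = 0 \<or> t = 0" using assms by auto
    have "r - 1 \<noteq> 0" "r/2 \<noteq> 0" using r1 by auto
    then have X0: "s*pw t (r-1) + t*pw s (r-1) = 0" and Y0: "pw s (r/2) * pw t (r/2) = 0"
      using z by (auto simp: pw_zero)
    show ?thesis unfolding c_def[symmetric] L R X0 Y0 using c01 Pnn
      by (simp add: mult_left_le_one_le)
  qed
qed

lemma F4:
  assumes "s \<ge> 0" "t \<ge> 0" "r > 1" "\<bar>b\<bar> \<le> 1"
  shows "\<bar>b\<bar> * \<bar>s * pw t (r-1) - t * pw s (r-1)\<bar>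
      \<le> \<bar>r - 2\<bar> / (2 * sqrt (r - 1)) *
         (pw s r + pw t r - sqrt (1 - b\<^sup>2) * (s * pw t (r-1) + t * pw s (r-1)))"
proof -
  define k where "k = \<bar>r - 2\<bar> / (2 * sqrt (r - 1))"
  have k0: "k \<ge> 0" unfolding k_def using assms by simp
  have Pnn: "pw s r + pw t r \<ge> 0" using pw_nonneg assms by (simp add: add_nonneg_nonneg)
  show ?thesis
  proof (cases "s > 0 \<and> t > 0")
    case True
    then obtain E z where Ez: "E > 0" "pw s r + pw t r = 2*E*cosh z"
     "s*pw t (r-1) + t*pw s (r-1) = 2*E*cosh (((2-r)/r)*z)"
     "s*pw t (r-1) - t*pw s (r-1) = 2*E*sinh (((2-r)/r)*z)"
      using rep[OF _ _ less_imp_le[OF assms(3)]] by blast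
    have a1: "\<bar>(2-r)/r\<bar> \<le> 1" using assms by (auto simp: abs_le_iff divide_le_eq le_divide_eq)
    have k2: "k^2 = (r-2)^2/(4*(r-1))" unfolding k_def using assms
      by (simp add: power_divide power_mult_distrib)
    have "(1 + k^2) * ((2-r)/r)^2 = k^2" unfolding k2 using assms
      by (simp add: field_simps power2_eq_square)
    from core4[OF a1 Ez(1) k0 this assms(4), of z] show ?thesis
      unfolding k_def[symmetric] Ez(2-4) .
  next
    case False
    then have z: "s = 0 \<or> t = 0" using assms by auto
    have "r - 1 \<noteq> 0" using assms by auto
    then have X0: "s*pw t (r-1) = 0" and Y0: "t*pw s (r-1) = 0"
      using z by (auto simp: pw_zero)
    show ?thesis unfolding k_def[symmetric] X0 Y0 using k0 Pnn by simp
  qed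
qed

definition fk :: "real \<Rightarrow> real \<Rightarrow> real" where
  "fk r u = (1 + u powr (1/r)) * (1 + u powr (1 / conj_exp r)) / (1 + u powr (1/2))\<^sup>2"

lemma kappa_fk: "kappa r = (SUP u\<in>{0<..<1}. fk r u)" by (simp add: kappa_def fk_def)

lemma conj_nonneg: "r \<ge> 1 \<Longrightarrow> conj_exp r \<ge> 0" by (simp add: conj_exp_def)

lemma inv_sum: "r \<ge> 1 \<Longrightarrow> 1/r + 1/conj_exp r = 1"
  by (cases "r = 1") (auto simp: conj_exp_def field_simps)

lemma r_conj: "r \<ge> 1 \<Longrightarrow> r * (1/conj_exp r) = r - 1"
  by (cases "r = 1") (auto simp: conj_exp_def field_simps)

lemma fk_le4: assumes "r \<ge> 1" "u \<in> {0<..<1}" shows "fk r u \<le> 4"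
proof -
  have u: "0 < u" "u \<le> 1" using assms by auto
  have p1: "u powr e \<le> 1" if "e \<ge> 0" for e
    using powr_mono2[OF that _ u(2)] u by simp
  have a: "u powr (1/r) \<le> 1" using p1 assms by simp
  have b: "u powr (1/conj_exp r) \<le> 1" using p1 conj_nonneg[OF assms(1)] by simp
  have "(1 + u powr (1/r)) * (1 + u powr (1 / conj_exp r)) \<le> 2 * 2"
    using a b by (intro mult_mono) auto
  moreover have D: "1 \<le> (1 + u powr (1/2))\<^sup>2" by (simp add: one_le_power)
  ultimately have "(1 + u powr (1/r)) * (1 + u powr (1 / conj_exp r)) \<le> 4 * (1 + u powr (1/2))\<^sup>2"
    by linarith
  moreover have "(1 + u powr (1/2))\<^sup>2 > 0" using D by linarith
  ultimately show ?thesis unfolding fk_def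
    by (simp only: pos_divide_le_eq)
qed

lemma bdd_fk: "r \<ge> 1 \<Longrightarrow> bdd_above (fk r ` {0<..<1})"
  by (rule bdd_aboveI2[where M=4]) (rule fk_le4)

lemma kappa_ge: "r \<ge> 1 \<Longrightarrow> u \<in> {0<..<1} \<Longrightarrow> fk r u \<le> kappa r"
  unfolding kappa_fk by (rule cSUP_upper) (auto intro: bdd_fk)

lemma fk_ge1: assumes "r \<ge> 1" "u \<in> {0<..<1}" shows "1 \<le> fk r u"
proof -
  have u: "0 < u" using assms by auto
  define x where "x = sqrt (u powr (1/r))"
  define y where "y = sqrt (u powr (1/conj_exp r))"
  have x2: "x^2 = u powr (1/r)" and y2: "y^2 = u powr (1/conj_exp r)" unfolding x_def y_def by auto
  have "x*y = sqrt (u powr (1/r + 1/conj_exp r))" unfolding x_def y_def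
    by (simp add: powr_add real_sqrt_mult)
  also have "\<dots> = u powr (1/2)" using inv_sum[OF assms(1)] u by (simp add: powr_half_sqrt)
  finally have xy: "u powr (1/2) = x*y" by simp
  have "(1 + x*y)^2 \<le> (1+x^2)*(1+y^2)"
  proof -
    have "0 \<le> (x-y)^2" by simp
    then show ?thesis by (simp add: power2_eq_square algebra_simps)
  qed
  moreover have "x \<ge> 0" "y \<ge> 0" unfolding x_def y_def by auto
  then have "x*y \<ge> 0" by simp
  then have "(1 + x*y)^2 > 0" by (intro zero_less_power) linarith
  ultimately show ?thesis unfolding fk_def xy x2[symmetric] y2[symmetric] by simp
qed

lemma kappa_ge1: "r \<ge> 1 \<Longrightarrow> 1 \<le> kappa r"
  using fk_ge1[of r "1/2"] kappa_ge[of r "1/2"] by auto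

lemma kappa1: "2 \<le> kappa 1"
proof -
  let ?f = "\<lambda>u::real. (1+u)*2/(1+sqrt u)^2"
  have lim: "(?f \<longlongrightarrow> (1+0)*2/(1+sqrt 0)^2) (at_right 0)"
    by (intro tendsto_intros) auto
  have ev: "eventually (\<lambda>u. ?f u \<le> kappa 1) (at_right 0)"
  proof (rule eventually_mono[OF eventually_at_right_real[of 0 1]])
    fix u :: real assume u: "u \<in> {0<..<1}"
    then have "fk 1 u = ?f u" by (auto simp: fk_def conj_exp_def powr_half_sqrt)
    then show "?f u \<le> kappa 1" using kappa_ge[of 1 u] u by simp
  qed simp
  show ?thesis using tendsto_upperbound[OF lim ev] by simp
qed

lemma pw_mult: "s \<ge> 0 \<Longrightarrow> v \<ge> 0 \<Longrightarrow> pw (s*v) a = pw s a * pw v a"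
  by (simp add: pw_def powr_mult)

lemma g_le: assumes "r \<ge> 1" "0 < v" "v \<le> 1"
  shows "(1+v)*(1+pw v (r-1)) \<le> kappa r * (1 + pw v (r/2))^2"
proof (cases "v = 1")
  case True
  have "pw 1 a = 1" for a by (simp add: pw_def)
  then show ?thesis using kappa_ge1[OF assms(1)] True by simp
next
  case False
  define u where "u = v powr r"
  have "v powr r < 1 powr r" using assms False by (intro powr_less_mono2) auto
  then have u01: "u \<in> {0<..<1}" unfolding u_def using assms by auto
  have "fk r u = (1+v)*(1+pw v (r-1)) / (1 + pw v (r/2))^2"
    unfolding fk_def u_def using assms
    using r_conj[OF assms(1)] by (simp add: powr_powr pw_pos)
  moreover have "pw v (r/2) \<ge> 0" using assms pw_nonneg[of v] by simp
  then have "(1 + pw v (r/2))^2 > 0" by (simp add: add_pos_nonneg)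
  ultimately show ?thesis using kappa_ge[OF assms(1) u01] by (simp add: divide_le_eq)
qed

lemma F2aux:
  assumes "0 \<le> t" "t \<le> s" "r \<ge> 1"
  shows "(s + t) * (pw s (r-1) + pw t (r-1)) \<le> kappa r * (pw s (r/2) + pw t (r/2))\<^sup>2"
proof (cases "t = 0")
  case t0: True
  show ?thesis
  proof (cases "s = 0")
    case True then show ?thesis using t0 kappa_ge1[OF assms(3)] by simp
  next
    case s0: False
    then have sp: "s > 0" using assms by simp
    show ?thesis
    proof (cases "r = 1")
      case True
      have "(pw s (1/2))^2 = s" using I2[of s 1] sp by (simp add: pw_def)
      then have R: "kappa r * (pw s (r/2) + pw t (r/2))\<^sup>2 = kappa 1 * s"
        using True t0 by (simp add: pw_def)
      have "(s + t) * (pw s (r-1) + pw t (r-1)) = 2 * s" using True t0 by (simp add: pw_def)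
      then show ?thesis unfolding R using kappa1 sp
        by (simp add: mult_right_mono)
    next
      case False
      then have "r - 1 \<noteq> 0" "r/2 \<noteq> 0" using assms by auto
      then have "(s + t) * (pw s (r-1) + pw t (r-1)) = pw s r"
        "kappa r * (pw s (r/2) + pw t (r/2))\<^sup>2 = kappa r * pw s r"
        using t0 I1[of s r] I2[of s r] sp assms by (simp_all add: pw_zero)
      then show ?thesis using kappa_ge1[OF assms(3)] pw_nonneg[of s r] sp
        by (simp add: mult_le_cancel_right1)
    qed
  qed
next
  case False
  then have tp: "t > 0" and sp: "s > 0" using assms by auto
  define v where "v = t/s"
  have v: "0 < v" "v \<le> 1" using tp sp assms unfolding v_def by auto
  have tv: "t = s*v" unfolding v_def using sp by simp
  have pt: "pw t a = pw s a * pw v a" for a unfolding tv using sp v by (simp add: pw_mult)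
  have "(s + t) * (pw s (r-1) + pw t (r-1)) = (s * pw s (r-1)) * ((1+v)*(1+pw v (r-1)))"
    unfolding pt by (simp add: tv algebra_simps)
  also have "\<dots> = pw s r * ((1+v)*(1+pw v (r-1)))" using I1[of s r] sp assms by simp
  also have "\<dots> \<le> pw s r * (kappa r * (1 + pw v (r/2))^2)"
    using g_le[OF assms(3) v] pw_nonneg[of s r] sp by (intro mult_left_mono) auto
  also have "\<dots> = kappa r * ((pw s (r/2))^2 * (1 + pw v (r/2))^2)"
    using I2[of s r] sp assms by simp
  also have "\<dots> = kappa r * (pw s (r/2) + pw t (r/2))\<^sup>2"
    unfolding pt by (simp add: power2_eq_square algebra_simps)
  finally show ?thesis .
qed

lemma F2:
  assumes "0 \<le> t" "0 \<le> s" "r \<ge> 1"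
  shows "(s + t) * (pw s (r-1) + pw t (r-1)) \<le> kappa r * (pw s (r/2) + pw t (r/2))\<^sup>2"
proof (cases "t \<le> s")
  case True then show ?thesis using F2aux assms by blast
next
  case False
  then show ?thesis using F2aux[of s t r] assms by (simp add: add.commute)
qed

theorem lemma5:
  fixes s t r b :: real
  assumes "s \<ge> 0" "t \<ge> 0" "r \<ge> 1" "-1 \<le> b" "b \<le> 1"
  shows
   "(4 / (r * conj_exp r) * (pw s (r/2) - pw t (r/2))\<^sup>2 \<le> (s - t) * (pw s (r-1) - pw t (r-1))
     \<and> (s - t) * (pw s (r-1) - pw t (r-1)) \<le> (pw s (r/2) - pw t (r/2))\<^sup>2)
    \<and> ((pw s (r/2) + pw t (r/2))\<^sup>2 \<le> (s + t) * (pw s (r-1) + pw t (r-1))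
     \<and> (s + t) * (pw s (r-1) + pw t (r-1)) \<le> kappa r * (pw s (r/2) + pw t (r/2))\<^sup>2)
    \<and> (4 / (r * conj_exp r) * (pw s r + pw t r + 2 * b * pw (s*t) (r/2))
      \<le> pw s r + pw t r + b * (s * pw t (r-1) + t * pw s (r-1)))
    \<and> (r > 1 \<longrightarrow> \<bar>b\<bar> * \<bar>s * pw t (r-1) - t * pw s (r-1)\<bar>
      \<le> \<bar>r - 2\<bar> / (2 * sqrt (r - 1)) *
         (pw s r + pw t r - sqrt (1 - b\<^sup>2) * (s * pw t (r-1) + t * pw s (r-1))))
    \<and> (pw s r + pw t r + b * (s * pw t (r-1) + t * pw s (r-1))
      \<le> kappa r * (pw s r + pw t r + 2 * b * pw (s*t) (r/2)))"
proof -
  define A where "A = pw s (r/2)"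
  define B where "B = pw t (r/2)"
  define X where "X = s * pw t (r-1)"
  define Y where "Y = t * pw s (r-1)"
  define P where "P = pw s r + pw t r"
  define c where "c = 4 / (r * conj_exp r)"
  define K where "K = kappa r"
  have r0: "r > 0" using assms by simp
  have A0: "A \<ge> 0" and B0: "B \<ge> 0" unfolding A_def B_def using assms by (simp_all add: pw_nonneg)
  have X0: "X \<ge> 0" and Y0: "Y \<ge> 0" unfolding X_def Y_def using assms by (simp_all add: pw_nonneg)
  have hP: "P = A^2 + B^2" unfolding P_def A_def B_def using I2[OF assms(1) r0] I2[OF assms(2) r0] by simp
  have hR: "pw (s*t) (r/2) = A*B" unfolding A_def B_def using I3[OF assms(1,2) r0] .
  have hm: "(s - t) * (pw s (r-1) - pw t (r-1)) = P - X - Y"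
    unfolding P_def X_def Y_def using I1[OF assms(1,3)] I1[OF assms(2,3)] by (simp add: algebra_simps)
  have hp: "(s + t) * (pw s (r-1) + pw t (r-1)) = P + X + Y"
    unfolding P_def X_def Y_def using I1[OF assms(1,3)] I1[OF assms(2,3)] by (simp add: algebra_simps)
  have XY: "X*Y = (A*B)^2"
  proof -
    have "X*Y = (s * pw s (r-1)) * (t * pw t (r-1))" unfolding X_def Y_def by (simp add: algebra_simps)
    also have "\<dots> = A^2 * B^2" unfolding A_def B_def
      using I1[OF assms(1,3)] I1[OF assms(2,3)] I2[OF assms(1) r0] I2[OF assms(2) r0] by simp
    finally show ?thesis by (simp add: power_mult_distrib)
  qed
  have amgm: "2*(A*B) \<le> X + Y"
  proof (rule power2_le_imp_le)
    have "0 \<le> (X - Y)^2" by simp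
    then show "(2*(A*B))^2 \<le> (X+Y)^2" using XY by (simp add: power2_eq_square algebra_simps)
  qed (use X0 Y0 in simp)
  have f1: "c * (P - 2*(A*B)) \<le> P - X - Y"
    using F1[OF assms(1,2,3)] unfolding c_def[symmetric] A_def[symmetric] B_def[symmetric] hm
    by (simp add: power2_eq_square hP algebra_simps)
  have f2: "P + X + Y \<le> K * (P + 2*(A*B))"
    using F2[OF assms(2,1,3)] unfolding K_def[symmetric] A_def[symmetric] B_def[symmetric] hp
    by (simp add: power2_eq_square hP algebra_simps)
  have c01: "0 \<le> c" "c \<le> 1" using c_bounds[OF assms(3)] unfolding c_def by auto
  have K1: "1 \<le> K" unfolding K_def by (rule kappa_ge1[OF assms(3)])
  have sq1: "(A - B)^2 = P - 2*(A*B)" by (simp add: hP power2_eq_square algebra_simps)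
  have sq2: "(A + B)^2 = P + 2*(A*B)" by (simp add: hP power2_eq_square algebra_simps)
  have Pp: "0 \<le> P + 2*(A*B)" using A0 B0 hP by simp
  have Pm: "0 \<le> P - 2*(A*B)" using sq1 by (metis zero_le_power2)
  have bp: "0 \<le> (1+b)/2" "0 \<le> (1-b)/2" using assms by auto
  have l3: "c * (P + 2*b*(A*B)) \<le> P + b*(X+Y)"
  proof -
    have "c * (P + 2*(A*B)) \<le> 1 * (P + 2*(A*B))" using c01 Pp by (intro mult_right_mono) auto
    then have T1: "0 \<le> (P+X+Y) - c*(P+2*(A*B))" using amgm by simp
    have T2: "0 \<le> (P-X-Y) - c*(P-2*(A*B))" using f1 by simp
    have "0 \<le> (1+b)/2 * ((P+X+Y) - c*(P+2*(A*B))) + (1-b)/2 * ((P-X-Y) - c*(P-2*(A*B)))"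
      using T1 T2 bp by simp
    also have "\<dots> = P + b*(X+Y) - c * (P + 2*b*(A*B))" by (simp add: field_simps)
    finally show ?thesis by simp
  qed
  have l5: "P + b*(X+Y) \<le> K * (P + 2*b*(A*B))"
  proof -
    have "1 * (P - 2*(A*B)) \<le> K * (P - 2*(A*B))" using K1 Pm by (intro mult_right_mono) auto
    then have T2: "0 \<le> K*(P-2*(A*B)) - (P-X-Y)" using amgm by simp
    have T1: "0 \<le> K*(P+2*(A*B)) - (P+X+Y)" using f2 by simp
    have "0 \<le> (1+b)/2 * (K*(P+2*(A*B)) - (P+X+Y)) + (1-b)/2 * (K*(P-2*(A*B)) - (P-X-Y))"
      using T1 T2 bp by simp
    also have "\<dots> = K * (P + 2*b*(A*B)) - (P + b*(X+Y))" by (simp add: field_simps)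
    finally show ?thesis by simp
  qed
  have l4: "r > 1 \<longrightarrow> \<bar>b\<bar> * \<bar>X - Y\<bar>
      \<le> \<bar>r - 2\<bar> / (2 * sqrt (r - 1)) * (P - sqrt (1 - b\<^sup>2) * (X + Y))"
    using F4[OF assms(1,2)] assms(4,5) unfolding X_def Y_def P_def by auto
  show ?thesis
    unfolding hm hp hR c_def[symmetric] K_def[symmetric] A_def[symmetric] B_def[symmetric]
      X_def[symmetric] Y_def[symmetric] P_def[symmetric] sq1 sq2
    using f1 f2 l3 l4 l5 amgm
    by (intro conjI) (simp_all add: algebra_simps)
qed
end
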